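(* Let $K$ be any maximal connected set of marked vertices in the subgraph of $\Gamma_X$ induced on its bulk vertices. Then $$\sum_{t=1}^{T-1}|R_{2t+1}|_K+\sum_{t=1}^{T}|C_{2t}|_K\;\le\;\sum_{t=1}^{T-1}|P_{2t+1}|_K+\sum_{t=1}^{T}|B_{2t}|_K.$$
   Context: $Q=(H^X,H^Z)$ is a CSS code: full-rank $H^X\in\mathbb F_2^{m_x\times n}$, $H^Z\in\mathbb F_2^{m_z\times n}$ with $H^X(H^Z)^T=0$; write $i\sim c$ if qubit $i$ is in the support of check $c$. $Q$ is $\ell$-LDPC (rows of weight $\le\ell$, each qubit in $\le\ell$ checks). ATG: fix $T\ge1$; graph with code vertices $q_{i,t}$ ($i\in[n]$, $t\in[2T+1]$), Z-check vertices $z_{c,t}$ ($c\in[m_z]$, $t$ odd), X-check vertices $x_{c,t}$ ($c\in[m_x]$, $t$ even); edges $q_{i,t}q_{i,t+1}$, $q_{i,t}z_{c,t}$ ($t$ odd, $H^Z_{c,i}=1$), $q_{i,t}x_{c,t}$ ($t$ even, $H^X_{c,i}=1$). Boundary $\partial=\{q_{i,1},q_{i,2T+1}\}$, bulk $\mathcal B=$ all other vertices. Decoding setup. A Z-type bulk error is $\eta\in\{0,1\}^{\mathcal B}$ with components $P_t\in\{0,1\}^n$ (code vertices of layer $t$, $2\le t\le 2T$) and $B_t$ (check vertices of layer $t$; $B_t\in\{0,1\}^{m_z}$ for odd $t$, $\in\{0,1\}^{m_x}$ for even $t$). The meta-check vectors are the indicator vectors $\alpha\in\{0,1\}^{\mathcal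 B}$ of the sets $\{z_{c,t-1},z_{c,t+1}\}\cup\{q_{i,t}:i\sim c\}$ ($t$ even, $c\in[m_z]$) and $\{x_{c,t-1},x_{c,t+1}\}\cup\{q_{i,t}:i\sim c\}$ ($t$ odd, $3\le t\le 2T-1$, $c\in[m_x]$). The decoder outputs a minimum-Hamming-weight $\beta\in\{0,1\}^{\mathcal B}$ with $\alpha\cdot\beta=\alpha\cdot\eta\pmod 2$ for all meta-check vectors $\alpha$; $R_t,C_t$ denote the components of $\beta$ analogous to $P_t,B_t$. Residual: $G_1\in\{0,1\}^n$ is a minimum-weight vector with $H^XG_1=B_2\oplus C_2$ and $G_{2T+1}$ a minimum-weight vector with $H^XG_{2T+1}=B_{2T}\oplus C_{2T}$. X syndrome adjacency graph $\Gamma_X$: vertex set $\{q_{i,t}: i\in[n], t\text{ odd in }[2T+1]\}\cup\{x_{c,t}:c\in[m_x], t\text{ even in }[2T]\}$; two distinct vertices are adjacent iff both lie in one of the sets $\{x_{c,t-1},x_{c,t+1}\}\cup\{q_{i,t}:i\sim c\}$ (odd $3\le t\le2T-1$), $\{x_{c,2}\}\cup\{q_{i,1}:i\sim c\}$, or $\{x_{c,2T}\}\cup\{q_{i,2T+1}:i\sim c\}$ ($c\in[m_x]$). Its boundary vertices are $q_{i,1},q_{i,2T+1}$; all others are its bulk vertices. Marking: bulk $q_{i,t}$ is marked iff $(P_t)_i\ne(R_t)_i$; $x_{c,t}$ is marked iff $(B_t)_c\ne(C_t)_c$; $q_{i,1}$ (resp. $q_{i,2T+1}$) is marked iff $(G_1)_i=1$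 (resp. $(G_{2T+1})_i=1$). For a vector $U$ indexed by the vertices of one layer and a vertex set $K$, $|U|_K$ denotes the number of positions $j$ with $U_j=1$ whose corresponding vertex lies in $K$. *)

theory Defs
  imports Main
begin

text \<open>Conventions: [n] = {0..<n} for qubit and check indices; layers t range over
  {1..2T+1}. Matrices over F_2 are Boolean-valued functions (row, column).
  Vectors in {0,1}^V are represented by their supports (subsets of V).\<close>

datatype vtx = Q nat nat | ZC nat nat | XC nat nat

definition f2_full_row_rank :: "(nat \<Rightarrow> nat \<Rightarrow> bool) \<Rightarrow> nat \<Rightarrow> nat \<Rightarrow> bool" where
  "f2_full_row_rank H m n \<longleftrightarrow>
     (\<forall>S. S \<subseteq> {..<m} \<and> S \<noteq> {} \<longrightarrow> (\<exists>i<n. odd (card {c \<in> S. H c i})))"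

definition css_code :: "(nat \<Rightarrow> nat \<Rightarrow> bool) \<Rightarrow> (nat \<Rightarrow> nat \<Rightarrow> bool) \<Rightarrow> nat \<Rightarrow> nat \<Rightarrow> nat \<Rightarrow> bool" where
  "css_code HX HZ n mx mz \<longleftrightarrow>
     f2_full_row_rank HX mx n \<and> f2_full_row_rank HZ mz n \<and>
     (\<forall>c<mx. \<forall>d<mz. even (card {i. i < n \<and> HX c i \<and> HZ d i}))"

definition ldpc :: "nat \<Rightarrow> (nat \<Rightarrow> nat \<Rightarrow> bool) \<Rightarrow> nat \<Rightarrow> nat \<Rightarrow> bool" where
  "ldpc l H m n \<longleftrightarrow>
     (\<forall>c<m. card {i. i < n \<and> H c i} \<le> l) \<and> (\<forall>i<n. card {c. c < m \<and> H c i} \<le> l)"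

definition atg_vertices :: "nat \<Rightarrow> nat \<Rightarrow> nat \<Rightarrow> nat \<Rightarrow> vtx set" where
  "atg_vertices n mx mz T =
     {Q i t | i t. i < n \<and> 1 \<le> t \<and> t \<le> 2*T+1}
   \<union> {ZC c t | c t. c < mz \<and> odd t \<and> 1 \<le> t \<and> t \<le> 2*T+1}
   \<union> {XC c t | c t. c < mx \<and> even t \<and> 1 \<le> t \<and> t \<le> 2*T+1}"

definition atg_boundary :: "nat \<Rightarrow> nat \<Rightarrow> vtx set" where
  "atg_boundary n T = {Q i 1 | i. i < n} \<union> {Q i (2*T+1) | i. i < n}"

definition atg_bulk :: "nat \<Rightarrow> nat \<Rightarrow> nat \<Rightarrow> nat \<Rightarrow> vtx set" where
  "atg_bulk n mx mz T = atg_vertices n mx mz T - atg_boundary n T"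

definition meta_checks ::
  "(nat \<Rightarrow> nat \<Rightarrow> bool) \<Rightarrow> (nat \<Rightarrow> nat \<Rightarrow> bool) \<Rightarrow> nat \<Rightarrow> nat \<Rightarrow> nat \<Rightarrow> nat \<Rightarrow> vtx set set" where
  "meta_checks HX HZ n mx mz T =
     {{ZC c (t-1), ZC c (t+1)} \<union> {Q i t | i. i < n \<and> HZ c i} | c t.
        c < mz \<and> even t \<and> 2 \<le> t \<and> t \<le> 2*T}
   \<union> {{XC c (t-1), XC c (t+1)} \<union> {Q i t | i. i < n \<and> HX c i} | c t.
        c < mx \<and> odd t \<and> 3 \<le> t \<and> t \<le> 2*T-1}"

definition dot2 :: "vtx set \<Rightarrow> vtx set \<Rightarrow> bool" where
  "dot2 a b \<longleftrightarrow> odd (card (a \<inter> b))"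

definition decoder_output ::
  "(nat \<Rightarrow> nat \<Rightarrow> bool) \<Rightarrow> (nat \<Rightarrow> nat \<Rightarrow> bool) \<Rightarrow> nat \<Rightarrow> nat \<Rightarrow> nat \<Rightarrow> nat
   \<Rightarrow> vtx set \<Rightarrow> vtx set \<Rightarrow> bool" where
  "decoder_output HX HZ n mx mz T eta beta \<longleftrightarrow>
     (let B = atg_bulk n mx mz T; M = meta_checks HX HZ n mx mz T;
          ok = (\<lambda>b. b \<subseteq> B \<and> (\<forall>a\<in>M. dot2 a b = dot2 a eta))
      in ok beta \<and> (\<forall>b. ok b \<longrightarrow> card beta \<le> card b))"

definition gx_vertices :: "nat \<Rightarrow> nat \<Rightarrow> nat \<Rightarrow> vtx set" where
  "gx_vertices n mx T =
     {Q i t | i t. i < n \<and> odd t \<and> 1 \<le> t \<and> t \<le> 2*T+1}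
   \<union> {XC c t | c t. c < mx \<and> even t \<and> 1 \<le> t \<and> t \<le> 2*T}"

definition gx_hyperedges :: "(nat \<Rightarrow> nat \<Rightarrow> bool) \<Rightarrow> nat \<Rightarrow> nat \<Rightarrow> nat \<Rightarrow> vtx set set" where
  "gx_hyperedges HX n mx T =
     {{XC c (t-1), XC c (t+1)} \<union> {Q i t | i. i < n \<and> HX c i} | c t.
        c < mx \<and> odd t \<and> 3 \<le> t \<and> t \<le> 2*T-1}
   \<union> {{XC c 2} \<union> {Q i 1 | i. i < n \<and> HX c i} | c. c < mx}
   \<union> {{XC c (2*T)} \<union> {Q i (2*T+1) | i. i < n \<and> HX c i} | c. c < mx}"

definition gx_adj :: "(nat \<Rightarrow> nat \<Rightarrow> bool) \<Rightarrow> nat \<Rightarrow> nat \<Rightarrow> nat \<Rightarrow> vtx \<Rightarrow> vtx \<Rightarrow> bool" where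
  "gx_adj HX n mx T u v \<longleftrightarrow>
     u \<in> gx_vertices n mx T \<and> v \<in> gx_vertices n mx T \<and> u \<noteq> v \<and>
     (\<exists>e\<in>gx_hyperedges HX n mx T. u \<in> e \<and> v \<in> e)"

definition gx_bulk :: "nat \<Rightarrow> nat \<Rightarrow> nat \<Rightarrow> vtx set" where
  "gx_bulk n mx T = gx_vertices n mx T - atg_boundary n T"

text \<open>Marked bulk vertices of Gamma_X: bulk q_{i,t} marked iff (P_t)_i \<noteq> (R_t)_i,
  x_{c,t} marked iff (B_t)_c \<noteq> (C_t)_c.\<close>
definition marked_bulk :: "nat \<Rightarrow> nat \<Rightarrow> nat \<Rightarrow> vtx set \<Rightarrow> vtx set \<Rightarrow> vtx set" where
  "marked_bulk n mx T eta beta = {v \<in> gx_bulk n mx T. (v \<in> eta) \<noteq> (v \<in> beta)}"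

definition connected_set :: "(vtx \<Rightarrow> vtx \<Rightarrow> bool) \<Rightarrow> vtx set \<Rightarrow> bool" where
  "connected_set E S \<longleftrightarrow> S \<noteq> {} \<and>
     (\<forall>u\<in>S. \<forall>v\<in>S. (\<lambda>a b. a \<in> S \<and> b \<in> S \<and> E a b)\<^sup>*\<^sup>* u v)"

definition maximal_marked_cluster ::
  "(nat \<Rightarrow> nat \<Rightarrow> bool) \<Rightarrow> nat \<Rightarrow> nat \<Rightarrow> nat \<Rightarrow> vtx set \<Rightarrow> vtx set \<Rightarrow> vtx set \<Rightarrow> bool" where
  "maximal_marked_cluster HX n mx T eta beta K \<longleftrightarrow>
     (let E = (\<lambda>u v. u \<in> gx_bulk n mx T \<and> v \<in> gx_bulk n mx T \<and> gx_adj HX n mx T u v);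
          M = marked_bulk n mx T eta beta
      in K \<subseteq> M \<and> connected_set E K \<and>
         (\<forall>K'. K \<subseteq> K' \<and> K' \<subseteq> M \<and> connected_set E K' \<longrightarrow> K' = K))"

end

theory Submission
  imports Defs
begin

lemma gxv_Q[simp]: "Q i t \<in> gx_vertices n mx T \<longleftrightarrow> i < n \<and> odd t \<and> 1 \<le> t \<and> t \<le> 2*T+1"
  by (auto simp: gx_vertices_def)
lemma gxv_X[simp]: "XC c t \<in> gx_vertices n mx T \<longleftrightarrow> c < mx \<and> even t \<and> 1 \<le> t \<and> t \<le> 2*T"
  by (auto simp: gx_vertices_def)
lemma gxv_Z[simp]: "ZC c t \<notin> gx_vertices n mx T"
  by (auto simp: gx_vertices_def)
lemma bd_Q[simp]: "Q i t \<in> atg_boundary n T \<longleftrightarrow> i < n \<and> (t = 1 \<or> t = 2*T+1)"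
  by (auto simp: atg_boundary_def)
lemma bd_X[simp]: "XC i t \<notin> atg_boundary n T"
  by (auto simp: atg_boundary_def)
lemma bd_Z[simp]: "ZC i t \<notin> atg_boundary n T"
  by (auto simp: atg_boundary_def)

lemma gxb_Q[simp]: "Q i t \<in> gx_bulk n mx T \<longleftrightarrow> i < n \<and> odd t \<and> 3 \<le> t \<and> t \<le> 2*T-1"
  unfolding gx_bulk_def by auto presburger+
lemma gxb_X[simp]: "XC c t \<in> gx_bulk n mx T \<longleftrightarrow> c < mx \<and> even t \<and> 1 \<le> t \<and> t \<le> 2*T"
  unfolding gx_bulk_def by auto
lemma gxb_Z[simp]: "ZC c t \<notin> gx_bulk n mx T"
  unfolding gx_bulk_def by auto

lemma finite_atg: "finite (atg_vertices n mx mz T)"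
proof -
  have "atg_vertices n mx mz T \<subseteq> (\<lambda>(i,t). Q i t) ` ({..<n}\<times>{..2*T+1})
      \<union> (\<lambda>(i,t). ZC i t) ` ({..<mz}\<times>{..2*T+1}) \<union> (\<lambda>(i,t). XC i t) ` ({..<mx}\<times>{..2*T+1})"
    unfolding atg_vertices_def by force
  thus ?thesis by (rule finite_subset) auto
qed

lemma gxb_sub: "gx_bulk n mx T \<subseteq> atg_bulk n mx mz T"
proof
  fix v assume v: "v \<in> gx_bulk n mx T"
  show "v \<in> atg_bulk n mx mz T"
  proof (cases v)
    case (Q i t) with v show ?thesis unfolding atg_bulk_def atg_vertices_def by auto
  next
    case (ZC c t) with v show ?thesis by simp
  next
    case (XC c t) with v show ?thesis unfolding atg_bulk_def atg_vertices_def by auto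
  qed
qed

lemma par:
  assumes "finite A" "finite B"
  shows "odd (card ((A - B) \<union> (B - A))) \<longleftrightarrow> odd (card A + card B)"
proof -
  have "card ((A - B) \<union> (B - A)) = card (A - B) + card (B - A)"
    by (rule card_Un_disjoint) (use assms in auto)
  moreover have "card (A - B) = card A - card (A \<inter> B)"
    using assms by (simp add: card_Diff_subset_Int)
  moreover have "card (B - A) = card B - card (A \<inter> B)"
    using assms by (metis card_Diff_subset_Int finite_Int Int_commute)
  moreover have "card (A \<inter> B) \<le> card A" "card (A \<inter> B) \<le> card B"
    using assms by (auto intro: card_mono)
  ultimately show ?thesis by auto
qed


lemma count_layers:
  assumes S: "S \<subseteq> gx_bulk n mx T" and fin: "finite S"
  shows "card S = (\<Sum>t=1..T-1. card {i. i < n \<and> Q i (2*t+1) \<in> S})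
       + (\<Sum>t=1..T. card {c. c < mx \<and> XC c (2*t) \<in> S})"
proof -
  define AQ where "AQ t = (\<lambda>i. Q i (2*t+1)) ` {i. i < n \<and> Q i (2*t+1) \<in> S}" for t
  define AX where "AX t = (\<lambda>c. XC c (2*t)) ` {c. c < mx \<and> XC c (2*t) \<in> S}" for t
  have cQ: "card (AQ t) = card {i. i < n \<and> Q i (2*t+1) \<in> S}" for t
    unfolding AQ_def by (rule card_image) (auto simp: inj_on_def)
  have cX: "card (AX t) = card {c. c < mx \<and> XC c (2*t) \<in> S}" for t
    unfolding AX_def by (rule card_image) (auto simp: inj_on_def)
  have fQ: "finite (AQ t)" for t unfolding AQ_def by auto
  have fX: "finite (AX t)" for t unfolding AX_def by auto
  have UQ: "card (\<Union>t\<in>{1..T-1}. AQ t) = (\<Sum>t=1..T-1. card (AQ t))"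
    by (rule card_UN_disjoint) (auto simp: fQ AQ_def)
  have UX: "card (\<Union>t\<in>{1..T}. AX t) = (\<Sum>t=1..T. card (AX t))"
    by (rule card_UN_disjoint) (auto simp: fX AX_def)
  have Seq: "S = (\<Union>t\<in>{1..T-1}. AQ t) \<union> (\<Union>t\<in>{1..T}. AX t)"
  proof
    show "S \<subseteq> (\<Union>t\<in>{1..T-1}. AQ t) \<union> (\<Union>t\<in>{1..T}. AX t)"
    proof
      fix v assume v: "v \<in> S"
      hence vb: "v \<in> gx_bulk n mx T" using S by auto
      show "v \<in> (\<Union>t\<in>{1..T-1}. AQ t) \<union> (\<Union>t\<in>{1..T}. AX t)"
      proof (cases v)
        case (Q i t)
        with vb have h: "i < n" "odd t" "3 \<le> t" "t \<le> 2*T-1" by auto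
        define s where "s = t div 2"
        have ts: "t = 2*s+1" using h(2) unfolding s_def by presburger
        have "s \<in> {1..T-1}" using h ts by auto
        moreover have "v \<in> AQ s" unfolding AQ_def using Q v h ts by auto
        ultimately show ?thesis by blast
      next
        case (ZC c t) with vb show ?thesis by simp
      next
        case (XC c t)
        with vb have h: "c < mx" "even t" "1 \<le> t" "t \<le> 2*T" by auto
        define s where "s = t div 2"
        have ts: "t = 2*s" using h(2) unfolding s_def by presburger
        have "s \<in> {1..T}" using h ts by auto
        moreover have "v \<in> AX s" unfolding AX_def using XC v h ts by auto
        ultimately show ?thesis by blast
      qed
    qed
  next
    show "(\<Union>t\<in>{1..T-1}. AQ t) \<union> (\<Union>t\<in>{1..T}. AX t) \<subseteq> S"
      unfolding AQ_def AX_def by auto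
  qed
  have "card S = card (\<Union>t\<in>{1..T-1}. AQ t) + card (\<Union>t\<in>{1..T}. AX t)"
    by (subst Seq, rule card_Un_disjoint) (auto simp: fQ fX AQ_def AX_def)
  thus ?thesis using UQ UX cQ cX by simp
qed


lemma grow:
  assumes con: "connected_set E K" and KM: "K \<subseteq> M"
    and mx: "\<forall>K'. K \<subseteq> K' \<and> K' \<subseteq> M \<and> connected_set E K' \<longrightarrow> K' = K"
    and k0: "k0 \<in> K" and XM: "X \<subseteq> M"
    and adj: "\<forall>x\<in>X. x \<noteq> k0 \<longrightarrow> E x k0 \<and> E k0 x"
  shows "X \<subseteq> K"
proof -
  define K' where "K' = K \<union> X"
  let ?R = "\<lambda>a b. a \<in> K \<and> b \<in> K \<and> E a b"
  let ?R' = "\<lambda>a b. a \<in> K' \<and> b \<in> K' \<and> E a b"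
  have lift: "?R'\<^sup>*\<^sup>* u v" if "u \<in> K" "v \<in> K" for u v
  proof -
    have "?R\<^sup>*\<^sup>* u v" using con that unfolding connected_set_def by blast
    moreover have "?R \<le> ?R'" unfolding K'_def by auto
    ultimately show ?thesis using rtranclp_mono by blast
  qed
  have to: "?R'\<^sup>*\<^sup>* u k0" if "u \<in> K'" for u
  proof (cases "u \<in> K")
    case True thus ?thesis using lift k0 by blast
  next
    case False
    hence "u \<in> X" "u \<noteq> k0" using that k0 unfolding K'_def by auto
    hence "?R' u k0" using adj k0 unfolding K'_def by auto
    thus ?thesis by blast
  qed
  have from0: "?R'\<^sup>*\<^sup>* k0 v" if "v \<in> K'" for v
  proof (cases "v \<in> K")
    case True thus ?thesis using lift k0 by blast
  next
    case False
    hence "v \<in> X" "v \<noteq> k0" using that k0 unfolding K'_def by auto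
    hence "?R' k0 v" using adj k0 unfolding K'_def by auto
    thus ?thesis by blast
  qed
  have "connected_set E K'"
    unfolding connected_set_def
  proof (intro conjI ballI)
    show "K' \<noteq> {}" using k0 unfolding K'_def by auto
  next
    fix u v assume "u \<in> K'" "v \<in> K'"
    thus "?R'\<^sup>*\<^sup>* u v" using to from0 by (meson rtranclp_trans)
  qed
  hence "K' = K" using mx KM XM unfolding K'_def by auto
  thus ?thesis unfolding K'_def by auto
qed

theorem lemma5p1:
  fixes HX HZ :: "nat \<Rightarrow> nat \<Rightarrow> bool"
    and n mx mz l T :: nat
    and eta beta K :: "vtx set"
  assumes "css_code HX HZ n mx mz"
    and "ldpc l HX mx n" and "ldpc l HZ mz n"
    and "T \<ge> 1"
    and "eta \<subseteq> atg_bulk n mx mz T"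
    and "decoder_output HX HZ n mx mz T eta beta"
    and "maximal_marked_cluster HX n mx T eta beta K"
  shows "(\<Sum>t=1..T-1. card {i. i < n \<and> Q i (2*t+1) \<in> beta \<and> Q i (2*t+1) \<in> K})
       + (\<Sum>t=1..T. card {c. c < mx \<and> XC c (2*t) \<in> beta \<and> XC c (2*t) \<in> K})
       \<le> (\<Sum>t=1..T-1. card {i. i < n \<and> Q i (2*t+1) \<in> eta \<and> Q i (2*t+1) \<in> K})
       + (\<Sum>t=1..T. card {c. c < mx \<and> XC c (2*t) \<in> eta \<and> XC c (2*t) \<in> K})"
proof -
  define B where "B = atg_bulk n mx mz T"
  define M where "M = meta_checks HX HZ n mx mz T"
  define E where "E = (\<lambda>u v. u \<in> gx_bulk n mx T \<and> v \<in> gx_bulk n mx T \<and> gx_adj HX n mx T u v)"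
  define Mk where "Mk = marked_bulk n mx T eta beta"
  have betaB: "beta \<subseteq> B" and betaM: "\<forall>a\<in>M. dot2 a beta = dot2 a eta"
    and minb: "\<And>b. b \<subseteq> B \<Longrightarrow> (\<forall>a\<in>M. dot2 a b = dot2 a eta) \<Longrightarrow> card beta \<le> card b"
    using assms(6) unfolding decoder_output_def Let_def B_def M_def by auto
  have KMk: "K \<subseteq> Mk" and con: "connected_set E K"
    and mxK: "\<forall>K'. K \<subseteq> K' \<and> K' \<subseteq> Mk \<and> connected_set E K' \<longrightarrow> K' = K"
    using assms(7) unfolding maximal_marked_cluster_def Let_def E_def Mk_def by auto
  have Mkb: "Mk \<subseteq> gx_bulk n mx T" unfolding Mk_def marked_bulk_def by auto
  have KB: "K \<subseteq> gx_bulk n mx T" using KMk Mkb by auto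
  have finB: "finite B" unfolding B_def atg_bulk_def using finite_atg by auto
  have fbeta: "finite beta" using betaB finB finite_subset by auto
  have feta: "finite eta" using assms(5) finB finite_subset unfolding B_def by auto
  have KB2: "K \<subseteq> B" using KB gxb_sub[of n mx T mz] unfolding B_def by blast
  have fK: "finite K" using KB2 finB finite_subset by auto
  define beta' where "beta' = (beta - K) \<union> (K - beta)"
  have b'B: "beta' \<subseteq> B" using betaB KB2 unfolding beta'_def by auto
  have b'M: "\<forall>a\<in>M. dot2 a beta' = dot2 a eta"
  proof
    fix a assume aM: "a \<in> M"
    show "dot2 a beta' = dot2 a eta"
    proof (cases "a \<inter> K = {}")
      case True
      hence "a \<inter> beta' = a \<inter> beta" unfolding beta'_def by auto
      thus ?thesis using betaM aM unfolding dot2_def by simp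
    next
      case False
      then obtain k0 where k0: "k0 \<in> a" "k0 \<in> K" by auto
      from aM consider
        (Z) c t where "a = {ZC c (t-1), ZC c (t+1)} \<union> {Q i t | i. i < n \<and> HZ c i}"
          "c < mz" "even t" "2 \<le> t" "t \<le> 2*T"
      | (X) c t where "a = {XC c (t-1), XC c (t+1)} \<union> {Q i t | i. i < n \<and> HX c i}"
          "c < mx" "odd t" "3 \<le> t" "t \<le> 2*T-1"
        unfolding M_def meta_checks_def by blast
      then show ?thesis
      proof cases
        case Z
        with k0 KB show ?thesis by auto
      next
        case X
        have agx: "a \<subseteq> gx_bulk n mx T" using X by auto
        have ahe: "a \<in> gx_hyperedges HX n mx T"
          unfolding gx_hyperedges_def using X by blast
        have "a \<inter> Mk \<subseteq> K"
        proof (rule grow[OF con KMk mxK k0(2)])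
          show "a \<inter> Mk \<subseteq> Mk" by auto
          show "\<forall>x\<in>a \<inter> Mk. x \<noteq> k0 \<longrightarrow> E x k0 \<and> E k0 x"
          proof (intro ballI impI)
            fix x assume x: "x \<in> a \<inter> Mk" "x \<noteq> k0"
            have "x \<in> gx_bulk n mx T" "k0 \<in> gx_bulk n mx T" using x agx k0 by auto
            moreover hence "x \<in> gx_vertices n mx T" "k0 \<in> gx_vertices n mx T"
              unfolding gx_bulk_def by auto
            ultimately show "E x k0 \<and> E k0 x"
              unfolding E_def gx_adj_def using x ahe k0 by blast
          qed
        qed
        hence aK: "a \<inter> K = a \<inter> Mk" using KMk by auto
        have aMk: "a \<inter> Mk = (a \<inter> eta - a \<inter> beta) \<union> (a \<inter> beta - a \<inter> eta)"
          using agx unfolding Mk_def marked_bulk_def by auto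
        have "odd (card (a \<inter> beta)) = odd (card (a \<inter> eta))"
          using betaM aM unfolding dot2_def by simp
        hence "even (card (a \<inter> K))"
          using par[of "a \<inter> eta" "a \<inter> beta"] feta fbeta aK aMk by auto
        moreover have "a \<inter> beta' = (a \<inter> beta - a \<inter> K) \<union> (a \<inter> K - a \<inter> beta)"
          unfolding beta'_def by auto
        ultimately have "odd (card (a \<inter> beta')) = odd (card (a \<inter> beta))"
          using par[of "a \<inter> beta" "a \<inter> K"] fbeta fK by auto
        thus ?thesis using betaM aM unfolding dot2_def by simp
      qed
    qed
  qed
  have le: "card beta \<le> card beta'" using minb[OF b'B b'M] .
  have c1: "card beta = card (beta - K) + card (beta \<inter> K)"
    using fbeta by (metis Diff_Diff_Int Diff_subset card_Diff_subset card_mono add_diff_inverse_nat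
        finite_Diff le_imp_diff_is_add Int_lower1 card_Diff_subset_Int finite_Int add.commute
        not_less_iff_gr_or_eq)
  have c2: "card beta' = card (beta - K) + card (K - beta)"
    unfolding beta'_def by (rule card_Un_disjoint) (use fbeta fK in auto)
  have "K - beta \<subseteq> eta \<inter> K" using KMk unfolding Mk_def marked_bulk_def by auto
  hence "card (K - beta) \<le> card (eta \<inter> K)" using feta by (auto intro: card_mono)
  hence main: "card (beta \<inter> K) \<le> card (eta \<inter> K)" using le c1 c2 by linarith
  have e1: "card (beta \<inter> K) = (\<Sum>t=1..T-1. card {i. i < n \<and> Q i (2*t+1) \<in> beta \<and> Q i (2*t+1) \<in> K})
       + (\<Sum>t=1..T. card {c. c < mx \<and> XC c (2*t) \<in> beta \<and> XC c (2*t) \<in> K})"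
    using count_layers[of "beta \<inter> K" n mx T] KB fK by auto
  have e2: "card (eta \<inter> K) = (\<Sum>t=1..T-1. card {i. i < n \<and> Q i (2*t+1) \<in> eta \<and> Q i (2*t+1) \<in> K})
       + (\<Sum>t=1..T. card {c. c < mx \<and> XC c (2*t) \<in> eta \<and> XC c (2*t) \<in> K})"
    using count_layers[of "eta \<inter> K" n mx T] KB fK by auto
  show ?thesis using main e1 e2 by simp
qed

end
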